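(* In the setting below, $\hat{w}_t$ is strictly increasing in $t$. Also, if $\eta \geq \eta_0$, then $\hat{w}_t \geq \gamma\eta/2 + \gamma(t-1)/16$ for all integers $1 \leq t \leq \tau$, and in particular $\hat{w}_t \geq 8\tilde{\lambda}$ for all $t \geq 1$.
   Context: Dimension $d=2$. Data $x_1,\dots,x_n\in\mathbb{R}^2$ with $\|x_i\|\le 1$, linearly separable (some $w$ has $\langle w,x_i\rangle>0$ for all $i$). $F(w) = \frac{1}{n}\sum_{i=1}^n \log(1+\exp(-\langle w, x_i\rangle))$. Maximum margin $\gamma = \max_{\|w\|=1}\min_i \langle w, x_i\rangle$ with maximizer the unit vector $w_*$. Gradient descent: $w_0=0$, $w_{t+1} = w_t - \eta\nabla F(w_t)$ with constant $\eta>0$. $\hat{w}_t = \langle w_t, w_*\rangle$. $\tau = \min\{t\ge 0: F(w_t)\le 1/(8\eta)\}$. $\eta_0 = \max(n, \frac{32}{\gamma^2}\log\frac{256}{\gamma^2})$. $\tilde{\lambda} = \log(8\eta)/\gamma$. *)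

theory Defs
  imports "HOL-Analysis.Analysis" "HOL-Library.Extended_Nat"
begin

definition logloss :: "(nat \<Rightarrow> real^2) \<Rightarrow> nat \<Rightarrow> real^2 \<Rightarrow> real" where
  "logloss x n w = (1 / real n) * (\<Sum>i<n. ln (1 + exp (- (w \<bullet> x i))))"

definition grad :: "(real^2 \<Rightarrow> real) \<Rightarrow> real^2 \<Rightarrow> real^2" where
  "grad f w = (SOME g. (f has_derivative (\<lambda>h. g \<bullet> h)) (at w))"

primrec gd :: "(real^2 \<Rightarrow> real) \<Rightarrow> real \<Rightarrow> nat \<Rightarrow> real^2" where
  "gd f eta 0 = 0"
| "gd f eta (Suc t) = gd f eta t - eta *\<^sub>R grad f (gd f eta t)"

definition margin :: "(nat \<Rightarrow> real^2) \<Rightarrow> nat \<Rightarrow> real" where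
  "margin x n = (SUP w \<in> {w :: real^2. norm w = 1}. Min ((\<lambda>i. w \<bullet> x i) ` {..<n}))"

definition tau :: "(nat \<Rightarrow> real^2) \<Rightarrow> nat \<Rightarrow> real \<Rightarrow> enat" where
  "tau x n eta = (if \<exists>t. logloss x n (gd (logloss x n) eta t) \<le> 1 / (8 * eta)
     then enat (LEAST t. logloss x n (gd (logloss x n) eta t) \<le> 1 / (8 * eta))
     else \<infinity>)"

definition eta0 :: "(nat \<Rightarrow> real^2) \<Rightarrow> nat \<Rightarrow> real" where
  "eta0 x n = max (real n) (32 / (margin x n)^2 * ln (256 / (margin x n)^2))"

definition lambda_tilde :: "(nat \<Rightarrow> real^2) \<Rightarrow> nat \<Rightarrow> real \<Rightarrow> real" where
  "lambda_tilde x n eta = ln (8 * eta) / margin x n"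

end

theory Submission imports Defs begin

lemma logloss_deriv:
  "(logloss x n has_derivative (\<lambda>h. (- ((1 / real n) *\<^sub>R (\<Sum>i<n. (1 / (1 + exp (w \<bullet> x i))) *\<^sub>R x i))) \<bullet> h)) (at w)"
proof -
  have d1: "((\<lambda>w. ln (1 + exp (- (w \<bullet> x i)))) has_derivative (\<lambda>h. (- (1 / (1 + exp (w \<bullet> x i)))) * (h \<bullet> x i))) (at w)" for i
  proof -
    have "((\<lambda>z. ln (1 + exp (- z))) has_real_derivative (- (1 / (1 + exp (w \<bullet> x i))))) (at (w \<bullet> x i))"
    proof -
      have "((\<lambda>z. ln (1 + exp (- z))) has_real_derivative (1 / (1 + exp (- (w \<bullet> x i))) * (exp (- (w \<bullet> x i)) * (-1)))) (at (w \<bullet> x i))"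
        by (auto intro!: derivative_eq_intros simp: add_pos_pos)
      moreover have "1 / (1 + exp (- (w \<bullet> x i))) * (exp (- (w \<bullet> x i)) * (-1)) = - (1 / (1 + exp (w \<bullet> x i)))"
        by (simp add: exp_minus field_simps add_pos_pos)
      ultimately show ?thesis by simp
    qed
    moreover have "((\<lambda>w. w \<bullet> x i) has_derivative (\<lambda>h. h \<bullet> x i)) (at w)"
      by (auto intro!: derivative_eq_intros)
    ultimately show ?thesis using DERIV_compose_FDERIV by (fastforce simp: mult.commute)
  qed
  have "((\<lambda>w. (1 / real n) * (\<Sum>i<n. ln (1 + exp (- (w \<bullet> x i))))) has_derivative
      (\<lambda>h. (1 / real n) * (\<Sum>i<n. (- (1 / (1 + exp (w \<bullet> x i)))) * (h \<bullet> x i)))) (at w)"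
    by (intro has_derivative_mult_right has_derivative_sum d1)
  moreover have "(\<lambda>h. (1 / real n) * (\<Sum>i<n. (- (1 / (1 + exp (w \<bullet> x i)))) * (h \<bullet> x i))) =
     (\<lambda>h. (- ((1 / real n) *\<^sub>R (\<Sum>i<n. (1 / (1 + exp (w \<bullet> x i))) *\<^sub>R x i))) \<bullet> h)"
    by (rule ext) (simp add: inner_sum_right sum_divide_distrib inner_commute sum_negf)
  ultimately show ?thesis unfolding logloss_def[abs_def] by simp
qed

lemma grad_logloss:
  "grad (logloss x n) w = - ((1 / real n) *\<^sub>R (\<Sum>i<n. (1 / (1 + exp (w \<bullet> x i))) *\<^sub>R x i))"
  (is "_ = ?G")
proof -
  have ex: "(logloss x n has_derivative (\<lambda>h. ?G \<bullet> h)) (at w)" by (rule logloss_deriv)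
  let ?g = "grad (logloss x n) w"
  have "(logloss x n has_derivative (\<lambda>h. ?g \<bullet> h)) (at w)"
    unfolding grad_def by (rule someI, rule ex)
  then have "(\<lambda>h. ?g \<bullet> h) = (\<lambda>h. ?G \<bullet> h)"
    using ex by (rule has_derivative_unique)
  then have "?g \<bullet> (?g - ?G) = ?G \<bullet> (?g - ?G)" by metis
  then have "(?g - ?G) \<bullet> (?g - ?G) = 0" by (simp only: inner_diff_left)
  then have "?g - ?G = 0" by (simp only: inner_eq_zero_iff)
  then show ?thesis by (simp only: right_minus_eq)
qed

lemma d_lower:
  fixes z :: real
  shows "1 / (1 + exp z) \<ge> min (ln (1 + exp (- z))) 1 / 2"
proof -
  define u where "u = exp (- z)"
  have u: "u > 0" by (simp add: u_def)
  have e: "1 / (1 + exp z) = u / (1 + u)" unfolding u_def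
    by (simp add: exp_minus field_simps add_pos_pos)
  show ?thesis
  proof (cases "u \<le> 1")
    case True
    have "ln (1 + u) \<le> u" using u by (simp add: ln_add_one_self_le_self)
    moreover have "u / 2 \<le> u / (1 + u)" using True u by (simp add: field_simps)
    ultimately have "min (ln (1 + u)) 1 / 2 \<le> u / (1 + u)" by linarith
    then show ?thesis using e u_def by simp
  next
    case False
    have "1 / 2 \<le> u / (1 + u)" using False by (simp add: field_simps)
    moreover have "min (ln (1 + u)) 1 / 2 \<le> 1 / 2" by simp
    ultimately show ?thesis using e u_def by linarith
  qed
qed

lemma d_half:
  fixes z :: real
  assumes "ln (1 + exp (- z)) \<ge> 1"
  shows "1 / (1 + exp z) \<ge> 1 / 2"
  using d_lower[of z] assms by (simp add: min_absorb2)

lemma d_pos: "(0::real) < 1 / (1 + exp z)"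
  by (simp add: add_pos_pos)

lemma key_ineq:
  fixes a eta :: real
  assumes a: "0 < a" "a \<le> 1" and eta: "eta \<ge> 32 / a * ln (256 / a)"
  shows "16 * ln (8 * eta) \<le> a * eta"
proof -
  define L where "L = ln (256 / a)"
  define A where "A = 32 / a * L"
  have L1: "L \<ge> 1" unfolding L_def using a
  proof -
    have "exp 1 \<le> (3::real)" using exp_le by simp
    also have "3 \<le> 256 / a" using a by (simp add: field_simps)
    finally show "1 \<le> ln (256 / a)" using a by (simp add: ln_ge_iff)
  qed
  have Apos: "A > 0" unfolding A_def using L1 a by simp
  have etapos: "eta > 0" using eta Apos unfolding A_def L_def by linarith
  have "ln (eta / A) \<le> eta / A - 1" using etapos Apos by (intro ln_le_minus_one) simp
  then have t: "ln (8 * eta) \<le> ln (8 * A) + (eta - A) / A"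
    using etapos Apos by (simp add: ln_div ln_mult diff_divide_distrib)
  have "8 * A = (256 / a) * L" unfolding A_def by simp
  then have l8: "ln (8 * A) = L + ln L" using L1 a unfolding L_def[symmetric]
    by (simp only: ln_mult[of "256 / a" L]) (simp add: L_def)
  have "ln L \<le> L" using L1 ln_le_minus_one[of L] by simp
  then have "16 * ln (8 * A) \<le> a * A" using l8 a unfolding A_def by simp
  moreover have "16 * ((eta - A) / A) \<le> a * (eta - A)"
  proof -
    have "16 / A \<le> a" unfolding A_def using a L1 by (simp add: field_simps)
    moreover have "eta - A \<ge> 0" using eta unfolding A_def L_def by simp
    ultimately have "16 / A * (eta - A) \<le> a * (eta - A)" by (intro mult_right_mono)
    then show ?thesis by simp
  qed
  moreover have "a * (eta - A) = a * eta - a * A" by (simp add: algebra_simps)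
  ultimately show ?thesis using t by linarith
qed

theorem lemma2:
  fixes x :: "nat \<Rightarrow> real^2" and n :: nat and eta :: real and ws :: "real^2"
  assumes "n \<ge> 1"
    and "\<forall>i<n. norm (x i) \<le> 1"
    and "\<exists>w :: real^2. \<forall>i<n. w \<bullet> x i > 0"
    and "norm ws = 1"
    and "Min ((\<lambda>i. ws \<bullet> x i) ` {..<n}) = margin x n"
    and "eta > 0"
  shows "strict_mono (\<lambda>t. gd (logloss x n) eta t \<bullet> ws)
    \<and> (eta \<ge> eta0 x n \<longrightarrow>
        (\<forall>t::nat. 1 \<le> t \<and> enat t \<le> tau x n eta \<longrightarrow>
            gd (logloss x n) eta t \<bullet> ws \<ge> margin x n * eta / 2 + margin x n * (real t - 1) / 16)
      \<and> (\<forall>t::nat. 1 \<le> t \<longrightarrow> gd (logloss x n) eta t \<bullet> ws \<ge> 8 * lambda_tilde x n eta))"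
proof -
  note n1 = assms(1) and xb = assms(2) and sep = assms(3) and wsn = assms(4)
    and mg = assms(5) and etap = assms(6)
  define g where "g = margin x n"
  define W where "W t = gd (logloss x n) eta t" for t
  define d where "d w i = 1 / (1 + exp (w \<bullet> x i))" for w i
  define F where "F w = logloss x n w" for w
  have npos: "real n > 0" using n1 by simp
  have ne0: "{..<n} \<noteq> {}" using n1 lessThan_empty_iff[of n] by simp
  have fin: "finite ((\<lambda>i. ws \<bullet> x i) ` {..<n})" 
    by auto
  have ge: "x i \<bullet> ws \<ge> g" if "i < n" for i
  proof -
    have "Min ((\<lambda>i. ws \<bullet> x i) ` {..<n}) \<le> ws \<bullet> x i" using fin that by (intro Min_le) auto
    then show ?thesis using mg by (simp add: g_def inner_commute)
  qed
  have g1: "g \<le> 1"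
  proof -
    have "g \<le> x 0 \<bullet> ws" using ge n1 by simp
    also have "\<dots> \<le> norm (x 0) * norm ws" by (rule norm_cauchy_schwarz)
    also have "\<dots> \<le> 1" using xb n1 wsn by simp
    finally show ?thesis .
  qed
  have gpos: "g > 0"
  proof -
    obtain w :: "real^2" where w: "\<forall>i<n. w \<bullet> x i > 0" using sep by blast
    have w0: "w \<noteq> 0" using w n1 by (metis inner_zero_left less_irrefl less_one order_less_le_trans)
    define v where "v = w /\<^sub>R norm w"
    have vn: "norm v = 1" using w0 by (simp add: v_def)
    have vpos: "\<forall>i<n. v \<bullet> x i > 0" using w w0 by (simp add: v_def)
    have "0 < Min ((\<lambda>i. v \<bullet> x i) ` {..<n})" using vpos ne0 by (subst Min_gr_iff) auto
    also have "Min ((\<lambda>i. v \<bullet> x i) ` {..<n}) \<le> g" unfolding g_def margin_def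
    proof (rule cSUP_upper)
      show "v \<in> {w. norm w = 1}" using vn by simp
      show "bdd_above ((\<lambda>w. Min ((\<lambda>i. w \<bullet> x i) ` {..<n})) ` {w. norm w = 1})"
      proof (rule bdd_aboveI2)
        fix u :: "real^2" assume "u \<in> {w. norm w = 1}"
        then have un: "norm u = 1" by simp
        have "Min ((\<lambda>i. u \<bullet> x i) ` {..<n}) \<le> u \<bullet> x 0" using n1 by (intro Min_le) auto
        also have "\<dots> \<le> norm u * norm (x 0)" by (rule norm_cauchy_schwarz)
        also have "\<dots> \<le> 1" using xb n1 un by simp
        finally show "Min ((\<lambda>i. u \<bullet> x i) ` {..<n}) \<le> 1" .
      qed
    qed
    finally show ?thesis .
  qed
  have step: "W (Suc t) \<bullet> ws = W t \<bullet> ws + eta * ((1 / real n) * (\<Sum>i<n. d (W t) i * (x i \<bullet> ws)))" for t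
    by (simp add: W_def grad_logloss d_def inner_diff_left inner_sum_left algebra_simps)
  have dpos: "d w i > 0" for w i unfolding d_def by (rule d_pos)
  have incr: "eta * ((1 / real n) * (\<Sum>i<n. d w i * (x i \<bullet> ws))) \<ge> eta * g * ((1 / real n) * (\<Sum>i<n. d w i))" for w
  proof -
    have "(\<Sum>i<n. d w i * g) \<le> (\<Sum>i<n. d w i * (x i \<bullet> ws))"
      using ge dpos by (intro sum_mono mult_left_mono) (auto intro: less_imp_le)
    then have "g * (\<Sum>i<n. d w i) \<le> (\<Sum>i<n. d w i * (x i \<bullet> ws))"
      by (simp add: sum_distrib_left mult.commute)
    then show ?thesis using etap npos by (simp add: field_simps)
  qed
  have sdpos: "(\<Sum>i<n. d w i) > 0" for w using dpos ne0 by (intro sum_pos) auto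
  have smono: "W t \<bullet> ws < W (Suc t) \<bullet> ws" for t
  proof -
    have "0 < eta * g * ((1 / real n) * (\<Sum>i<n. d (W t) i))"
      using etap gpos npos sdpos by simp
    then show ?thesis using step[of t] incr[of "W t"] by linarith
  qed
  have sm: "strict_mono (\<lambda>t. W t \<bullet> ws)" by (rule strict_monoI_Suc) (rule smono)
  have W1: "W 1 \<bullet> ws \<ge> g * eta / 2"
  proof -
    have d0: "d (W 0) i = 1 / 2" for i by (simp add: d_def W_def)
    have "(\<Sum>i<n. d (W 0) i) = real n / 2" by (simp add: d0)
    then have "(1 / real n) * (\<Sum>i<n. d (W 0) i) = 1 / 2" using npos by simp
    then have h: "eta * g * ((1 / real n) * (\<Sum>i<n. d (W 0) i)) = g * eta / 2" by simp
    have "W 0 \<bullet> ws = 0" by (simp add: W_def)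
    moreover have "W 1 \<bullet> ws = W 0 \<bullet> ws + eta * ((1 / real n) * (\<Sum>i<n. d (W 0) i * (x i \<bullet> ws)))"
      using step[of 0] by simp
    ultimately show ?thesis using incr[of "W 0"] h by linarith
  qed
  show ?thesis
  proof (intro conjI impI)
    show "strict_mono (\<lambda>t. gd (logloss x n) eta t \<bullet> ws)" using sm by (simp add: W_def)
  next
    assume e0: "eta0 x n \<le> eta"
    have etan: "real n \<le> eta" using e0 by (simp add: eta0_def)
    have etag: "32 / g\<^sup>2 * ln (256 / g\<^sup>2) \<le> eta" using e0 by (simp add: eta0_def g_def)
    have big: "W (Suc s) \<bullet> ws \<ge> W s \<bullet> ws + g / 16" if Fs: "F (W s) > 1 / (8 * eta)" for s
    proof -
      let ?w = "W s"
      have "(1 / real n) * (\<Sum>i<n. d ?w i) \<ge> 1 / (16 * eta)"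
      proof (cases "\<exists>i<n. ln (1 + exp (- (?w \<bullet> x i))) \<ge> 1")
        case True
        then obtain j where j: "j < n" "ln (1 + exp (- (?w \<bullet> x j))) \<ge> 1" by blast
        have "1 / 2 \<le> d ?w j" unfolding d_def using d_half[OF j(2)] .
        also have "d ?w j \<le> (\<Sum>i<n. d ?w i)" using j dpos
          by (intro member_le_sum) (auto intro: less_imp_le)
        finally have "1 / 2 \<le> (\<Sum>i<n. d ?w i)" .
        then have "1 / (2 * real n) \<le> (1 / real n) * (\<Sum>i<n. d ?w i)" using npos
          by (simp add: field_simps)
        moreover have "1 / (16 * eta) \<le> 1 / (2 * real n)" using npos etan
          by (simp add: field_simps)
        ultimately show ?thesis by linarith
      next
        case False
        have "(\<Sum>i<n. ln (1 + exp (- (?w \<bullet> x i))) / 2) \<le> (\<Sum>i<n. d ?w i)"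
        proof (rule sum_mono)
          fix i assume "i \<in> {..<n}"
          then have "ln (1 + exp (- (?w \<bullet> x i))) < 1" using False by auto
          then show "ln (1 + exp (- (?w \<bullet> x i))) / 2 \<le> d ?w i"
            using d_lower[of "?w \<bullet> x i"] unfolding d_def by (simp add: min_def)
        qed
        then have "F ?w / 2 \<le> (1 / real n) * (\<Sum>i<n. d ?w i)"
          unfolding F_def logloss_def using npos by (simp add: sum_divide_distrib[symmetric] field_simps)
        moreover have "1 / (16 * eta) < F ?w / 2" using Fs by simp
        ultimately show ?thesis by linarith
      qed
      then have "eta * g * ((1 / real n) * (\<Sum>i<n. d ?w i)) \<ge> eta * g * (1 / (16 * eta))"
        using etap gpos by (intro mult_left_mono) auto
      moreover have "eta * g * (1 / (16 * eta)) = g / 16" using etap by simp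
      ultimately show ?thesis using step[of s] incr[of ?w] by linarith
    qed
    show "\<forall>t::nat. 1 \<le> t \<and> enat t \<le> tau x n eta \<longrightarrow>
            gd (logloss x n) eta t \<bullet> ws \<ge> margin x n * eta / 2 + margin x n * (real t - 1) / 16"
    proof (intro allI impI, elim conjE)
      fix t :: nat assume t1: "1 \<le> t" and tt: "enat t \<le> tau x n eta"
      have Fgt: "F (W s) > 1 / (8 * eta)" if "s < t" for s
      proof (cases "\<exists>t. logloss x n (gd (logloss x n) eta t) \<le> 1 / (8 * eta)")
        case True
        then have "t \<le> (LEAST t. logloss x n (gd (logloss x n) eta t) \<le> 1 / (8 * eta))"
          using tt by (simp add: tau_def)
        then have "s < (LEAST t. logloss x n (gd (logloss x n) eta t) \<le> 1 / (8 * eta))" using that by simp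
        then have "\<not> logloss x n (gd (logloss x n) eta s) \<le> 1 / (8 * eta)" by (rule not_less_Least)
        then show ?thesis by (simp add: F_def W_def)
      next
        case False
        then have "\<not> logloss x n (gd (logloss x n) eta s) \<le> 1 / (8 * eta)" by blast
        then show ?thesis by (simp add: F_def W_def)
      qed
      have "\<forall>k. 1 + k \<le> t \<longrightarrow> W (1 + k) \<bullet> ws \<ge> g * eta / 2 + g * real k / 16"
      proof (intro allI)
        fix k show "1 + k \<le> t \<longrightarrow> W (1 + k) \<bullet> ws \<ge> g * eta / 2 + g * real k / 16"
        proof (induction k)
          case 0 then show ?case using W1 by simp
        next
          case (Suc k)
          show ?case
          proof
            assume h: "1 + Suc k \<le> t"
            then have "W (1 + k) \<bullet> ws \<ge> g * eta / 2 + g * real k / 16" using Suc by simp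
            moreover have "W (Suc (1 + k)) \<bullet> ws \<ge> W (1 + k) \<bullet> ws + g / 16"
              using big Fgt h by simp
            ultimately show "W (1 + Suc k) \<bullet> ws \<ge> g * eta / 2 + g * real (Suc k) / 16"
              by (simp add: field_simps)
          qed
        qed
      qed
      moreover have "1 + (t - 1) \<le> t" using t1 by simp
      ultimately have "W (1 + (t - 1)) \<bullet> ws \<ge> g * eta / 2 + g * real (t - 1) / 16" by blast
      moreover have "1 + (t - 1) = t" using t1 by simp
      moreover have "real (t - 1) = real t - 1" using t1 by (simp add: of_nat_diff)
      ultimately have "W t \<bullet> ws \<ge> g * eta / 2 + g * (real t - 1) / 16" by simp
      then show "gd (logloss x n) eta t \<bullet> ws \<ge> margin x n * eta / 2 + margin x n * (real t - 1) / 16"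
        using t1 by (simp add: W_def g_def of_nat_diff)
    qed
    show "\<forall>t::nat. 1 \<le> t \<longrightarrow> gd (logloss x n) eta t \<bullet> ws \<ge> 8 * lambda_tilde x n eta"
    proof (intro allI impI)
      fix t :: nat assume t1: "1 \<le> t"
      have a: "0 < g\<^sup>2" "g\<^sup>2 \<le> 1" using gpos g1 by (auto simp: power_le_one)
      have "16 * ln (8 * eta) \<le> g\<^sup>2 * eta" by (rule key_ineq[OF a etag])
      then have "8 * (ln (8 * eta) / g) \<le> g * eta / 2" using gpos
        by (simp add: field_simps power2_eq_square)
      also have "\<dots> \<le> W 1 \<bullet> ws" by (rule W1)
      also have "\<dots> \<le> W t \<bullet> ws" using strict_mono_less_eq[OF sm, of 1 t] t1 by simp
      finally show "gd (logloss x n) eta t \<bullet> ws \<ge> 8 * lambda_tilde x n eta"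
        by (simp add: W_def lambda_tilde_def g_def)
    qed
  qed
qed
end
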